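(* Let $\rho^{\textrm{sep}}$ be a separable state on $\mathbb{C}^d\otimes\mathbb{C}^d$ such that $\operatorname{Tr}(P_\mathcal{A} \rho^{\textrm{sep}})>0$. Then there is a separable state $\rho'^{\textrm{sep}}$ such that $\operatorname{Tr}(P_\mathcal{A} \rho'^{\textrm{sep}})=1/2$ and $\frac{P_\mathcal{A} \rho^{\textrm{sep}} P_\mathcal{A}}{\operatorname{Tr}(P_\mathcal{A} \rho^{\textrm{sep}})}= \frac{P_\mathcal{A} \rho'^{\textrm{sep}} P_\mathcal{A}}{\operatorname{Tr}(P_\mathcal{A} \rho'^{\textrm{sep}})}$.
   Context: Two $d$-dimensional systems $A,B$ with $\mathcal{H}_{AB}=\mathbb{C}^d\otimes\mathbb{C}^d$. $V$ is the swap operator, $V\ket{\alpha}\ket{\beta}=\ket{\beta}\ket{\alpha}$. $P_\mathcal{A}=(\mathbb{1}-V)/2$ is the projector onto the antisymmetric subspace (with $\mathbb{1}$ the identity operator). A state is separable if it can be written as $\sum_k q_k |\alpha_k\rangle\langle\alpha_k|\otimes|\beta_k\rangle\langle\beta_k|$ with $q_k$ a probability distribution. *)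

theory Defs
  imports "HOL-Analysis.Analysis"
begin

text \<open>Operators on C^d (x) C^d are complex matrices indexed by the finite type 'd * 'd;
  the basis vector indexed by (i,j) is |i>|j>.\<close>

definition swap_op :: "complex ^ ('d::finite \<times> 'd) ^ ('d \<times> 'd)" where
  "swap_op = (\<chi> x y. if fst x = snd y \<and> snd x = fst y then 1 else 0)"

definition P_A :: "complex ^ ('d::finite \<times> 'd) ^ ('d \<times> 'd)" where
  "P_A = (\<chi> x y. (mat 1 $ x $ y - swap_op $ x $ y) / 2)"

text \<open>|alpha><alpha| (x) |beta><beta|\<close>
definition prod_proj :: "complex ^ 'd \<Rightarrow> complex ^ 'd \<Rightarrow> complex ^ ('d::finite \<times> 'd) ^ ('d \<times> 'd)" where
  "prod_proj a b = (\<chi> x y. a $ fst x * cnj (a $ fst y) * (b $ snd x * cnj (b $ snd y)))"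

definition cmat_scale :: "complex \<Rightarrow> complex ^ 'n ^ 'm \<Rightarrow> complex ^ 'n ^ 'm" where
  "cmat_scale c M = (\<chi> i j. c * M $ i $ j)"

definition separable :: "complex ^ ('d::finite \<times> 'd) ^ ('d \<times> 'd) \<Rightarrow> bool" where
  "separable \<rho> \<longleftrightarrow> (\<exists>(n::nat) (q::nat \<Rightarrow> real) (a::nat \<Rightarrow> complex ^ 'd) (b::nat \<Rightarrow> complex ^ 'd).
      (\<forall>k<n. q k \<ge> 0 \<and> norm (a k) = 1 \<and> norm (b k) = 1) \<and> (\<Sum>k<n. q k) = 1 \<and>
      \<rho> = (\<Sum>k<n. cmat_scale (complex_of_real (q k)) (prod_proj (a k) (b k))))"

end

theory Submission
  imports Defs
begin

definition sw :: "'d \<times> 'd \<Rightarrow> 'd \<times> 'd" where "sw x = (snd x, fst x)"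

definition anti :: "('d \<times> 'd \<Rightarrow> complex) \<Rightarrow> 'd \<times> 'd \<Rightarrow> complex" where
  "anti v x = (v x - v (sw x)) / 2"

definition outer :: "('d::finite \<times> 'd \<Rightarrow> complex) \<Rightarrow> complex ^ ('d \<times> 'd) ^ ('d \<times> 'd)" where
  "outer v = (\<chi> x y. v x * cnj (v y))"

definition tv :: "complex ^ 'd \<Rightarrow> complex ^ 'd \<Rightarrow> 'd \<times> 'd \<Rightarrow> complex" where
  "tv a b x = a $ fst x * b $ snd x"

definition tr :: "('d::finite \<times> 'd \<Rightarrow> complex) \<Rightarrow> complex" where
  "tr v = (\<Sum>x\<in>UNIV. anti v x * cnj (v x))"

lemma sw_sw[simp]: "sw (sw x) = x" by (simp add: sw_def)

lemma sw_cond: "(fst x = snd z \<and> snd x = fst z) \<longleftrightarrow> z = sw x"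
  by (cases x, cases z) (auto simp: sw_def)

lemma mult_ind: "(a::complex) * (if P then 1 else 0) = (if P then a else 0)" by simp

lemma PA_entry: "P_A $ x $ z = ((if x = z then 1 else 0) - (if z = sw x then 1 else 0)) / 2"
  unfolding P_A_def swap_op_def mat_def sw_cond by simp

lemma PA_left: "(P_A ** (M :: complex ^ ('d::finite \<times> 'd) ^ ('d \<times> 'd))) $ x $ y = (M $ x $ y - M $ sw x $ y) / 2"
proof -
  have "(P_A ** M) $ x $ y = (\<Sum>z\<in>UNIV. ((if x = z then M $ z $ y else 0) - (if z = sw x then M $ z $ y else 0)) / 2)"
    unfolding matrix_matrix_mult_def PA_entry
    by (simp add: field_simps mult_ind)
  also have "\<dots> = (M $ x $ y - M $ sw x $ y) / 2"
    by (simp add: sum_divide_distrib[symmetric] sum_subtractf)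
  finally show ?thesis .
qed

lemma sw_eq: "(x = sw y) \<longleftrightarrow> (sw x = y)" by (auto simp: sw_def)

lemma PA_entry2: "P_A $ z $ y = ((if z = y then 1 else 0) - (if z = sw y then 1 else 0)) / 2"
  unfolding PA_entry by (auto simp: sw_def)

lemma PA_right: "((M :: complex ^ ('d::finite \<times> 'd) ^ ('d \<times> 'd)) ** P_A) $ x $ y = (M $ x $ y - M $ x $ sw y) / 2"
proof -
  have "(M ** P_A) $ x $ y = (\<Sum>z\<in>UNIV. ((if z = y then M $ x $ z else 0) - (if z = sw y then M $ x $ z else 0)) / 2)"
    unfolding matrix_matrix_mult_def PA_entry2
    by (simp add: field_simps mult_ind)
  also have "\<dots> = (M $ x $ y - M $ x $ sw y) / 2"
    by (simp add: sum_divide_distrib[symmetric] sum_subtractf)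
  finally show ?thesis .
qed

lemma prod_proj_outer: "prod_proj a b = outer (tv a b)"
  by (simp add: prod_proj_def outer_def tv_def vec_eq_iff)

definition rho_of :: "nat \<Rightarrow> (nat \<Rightarrow> real) \<Rightarrow> (nat \<Rightarrow> 'd \<times> 'd \<Rightarrow> complex) \<Rightarrow> complex ^ ('d::finite \<times> 'd) ^ ('d \<times> 'd)" where
  "rho_of n q v = (\<Sum>k<n. cmat_scale (complex_of_real (q k)) (outer (v k)))"

lemma rho_entry: "rho_of n q v $ x $ y = (\<Sum>k<n. of_real (q k) * (v k x * cnj (v k y)))"
  by (simp add: rho_of_def cmat_scale_def outer_def)

lemma trace_rho: "trace (P_A ** rho_of n q v) = (\<Sum>k<n. of_real (q k) * tr (v k))"
proof -
  have "trace (P_A ** rho_of n q v) = (\<Sum>x\<in>UNIV. (\<Sum>k<n. of_real (q k) * (anti (v k) x * cnj (v k x))))"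
    unfolding trace_def PA_left rho_entry anti_def
    by (rule sum.cong) (auto simp: sum_subtractf[symmetric] sum_divide_distrib algebra_simps)
  also have "\<dots> = (\<Sum>k<n. of_real (q k) * tr (v k))"
    by (subst sum.swap) (simp add: tr_def sum_distrib_left)
  finally show ?thesis .
qed

lemma PrhoP_entry: "(P_A ** rho_of n q v ** P_A) $ x $ y = (\<Sum>k<n. of_real (q k) * (anti (v k) x * cnj (anti (v k) y)))"
  unfolding PA_right PA_left rho_entry
  apply (simp only: sum_subtractf[symmetric] sum_divide_distrib)
  apply (rule sum.cong[OF refl])
  apply (simp add: anti_def field_simps)
  done

lemma sum_sw: "(\<Sum>x\<in>UNIV. g (sw x)) = (\<Sum>x\<in>(UNIV::('d::finite \<times> 'd) set). g x)"
  by (rule sum.reindex_bij_witness[of _ sw sw]) auto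

lemma anti_sw: "anti v (sw x) = - anti v x"
  by (simp add: anti_def field_simps)

lemma tr_sos: "tr v = (\<Sum>x\<in>UNIV. anti v x * cnj (anti v x))"
proof -
  have e: "(\<Sum>x\<in>UNIV. anti v x * cnj (v (sw x))) = - tr v"
  proof -
    have "(\<Sum>x\<in>UNIV. anti v x * cnj (v (sw x))) = (\<Sum>x\<in>UNIV. anti v (sw x) * cnj (v (sw (sw x))))"
      by (rule sum_sw[symmetric])
    also have "\<dots> = - tr v" by (simp add: anti_sw tr_def sum_negf)
    finally show ?thesis .
  qed
  have "(\<Sum>x\<in>UNIV. anti v x * cnj (anti v x)) = (\<Sum>x\<in>UNIV. anti v x * cnj (v x) - anti v x * cnj (v (sw x))) / 2"
    apply (simp only: sum_subtractf[symmetric] sum_divide_distrib)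
    apply (rule sum.cong[OF refl])
    apply (simp add: anti_def field_simps)
    done
  also have "\<dots> = tr v"
    by (simp add: sum_subtractf e tr_def[symmetric])
  finally show ?thesis by simp
qed

lemma tr_real: "tr v = of_real (\<Sum>x\<in>UNIV. (cmod (anti v x))^2)"
  unfolding tr_sos of_real_sum complex_norm_square ..

lemma tr_tv: "tr (tv a b) = ((\<Sum>i\<in>UNIV. a$i * cnj (a$i)) * (\<Sum>j\<in>UNIV. b$j * cnj (b$j))
    - (\<Sum>i\<in>UNIV. cnj (a$i) * b$i) * cnj (\<Sum>i\<in>UNIV. cnj (a$i) * b$i)) / 2"
proof -
  have "tr (tv a b) = (\<Sum>i\<in>UNIV. \<Sum>j\<in>UNIV. (a$i * b$j - a$j * b$i) / 2 * cnj (a$i * b$j))"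
    unfolding tr_def sum.cartesian_product UNIV_Times_UNIV
    by (rule sum.cong) (auto simp: anti_def tv_def sw_def)
  also have "\<dots> = ((\<Sum>i\<in>UNIV. \<Sum>j\<in>UNIV. (a$i * cnj (a$i)) * (b$j * cnj (b$j)))
      - (\<Sum>i\<in>UNIV. \<Sum>j\<in>UNIV. (cnj (a$i) * b$i) * (a$j * cnj (b$j)))) / 2"
    by (simp add: sum_subtractf[symmetric] sum_divide_distrib algebra_simps diff_divide_distrib)
  finally show ?thesis by (simp add: sum_product)
qed

lemma norm_sq: "of_real ((norm (x::complex^'d::finite))^2) = (\<Sum>i\<in>UNIV. x$i * cnj (x$i))"
proof -
  have "(norm x)^2 = (\<Sum>i\<in>UNIV. (norm (x$i))^2)"
    unfolding norm_vec_def L2_set_def by (simp add: sum_nonneg)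
  then have "complex_of_real ((norm x)^2) = (\<Sum>i\<in>UNIV. complex_of_real ((cmod (x$i))^2))"
    by (simp only: of_real_sum)
  also have "\<dots> = (\<Sum>i\<in>UNIV. x$i * cnj (x$i))" unfolding complex_norm_square ..
  finally show ?thesis .
qed

lemma anti_scale: "anti (tv a (\<chi> i. (b$i - c * a$i) / s)) x = anti (tv a b) x / s"
  by (simp add: anti_def tv_def sw_def diff_divide_distrib add_divide_distrib algebra_simps)

lemma norm_diff: assumes "(\<Sum>i\<in>UNIV. a$i * cnj (a$i)) = 1" "(\<Sum>i\<in>UNIV. b$i * cnj (b$i)) = 1"
    "c = (\<Sum>i\<in>UNIV. cnj (a$i) * b$i)"
  shows "(\<Sum>i\<in>(UNIV::'d::finite set). (b$i - c * a$i) * cnj (b$i - c * a$i)) = 1 - c * cnj c"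
proof -
  have "(\<Sum>i\<in>(UNIV::'d set). (b$i - c * a$i) * cnj (b$i - c * a$i)) =
     (\<Sum>i\<in>UNIV. b$i * cnj (b$i)) - cnj c * (\<Sum>i\<in>UNIV. cnj (a$i) * b$i)
     - c * (\<Sum>i\<in>UNIV. a$i * cnj (b$i)) + c * cnj c * (\<Sum>i\<in>UNIV. a$i * cnj (a$i))"
    by (simp add: sum_subtractf sum.distrib sum_distrib_left algebra_simps)
  also have "\<dots> = 1 - c * cnj c" using assms by simp
  finally show ?thesis .
qed

theorem lemma1:
  fixes \<rho> :: "complex ^ ('d::finite \<times> 'd) ^ ('d \<times> 'd)"
  assumes "separable \<rho>"
    and "Im (trace (P_A ** \<rho>)) = 0" and "Re (trace (P_A ** \<rho>)) > 0"
  shows "\<exists>\<rho>' :: complex ^ ('d \<times> 'd) ^ ('d \<times> 'd). separable \<rho>' \<and>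
           trace (P_A ** \<rho>') = 1/2 \<and>
           cmat_scale (inverse (trace (P_A ** \<rho>))) (P_A ** \<rho> ** P_A) =
           cmat_scale (inverse (trace (P_A ** \<rho>'))) (P_A ** \<rho>' ** P_A)"
proof -
  from assms(1) obtain n :: nat and q :: "nat \<Rightarrow> real" and a b :: "nat \<Rightarrow> complex ^ 'd" where
    H: "\<forall>k<n. q k \<ge> 0 \<and> norm (a k) = 1 \<and> norm (b k) = 1" and Hs: "(\<Sum>k<n. q k) = 1"
    and Hr: "\<rho> = (\<Sum>k<n. cmat_scale (complex_of_real (q k)) (prod_proj (a k) (b k :: complex^'d)))"
    unfolding separable_def by blast
  define v where "v k = tv (a k) (b k)" for k
  have rho: "\<rho> = rho_of n q v" unfolding Hr rho_of_def v_def prod_proj_outer ..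
  define \<tau> where "\<tau> k = (\<Sum>x\<in>UNIV. (cmod (anti (v k) x))^2)" for k
  have trv: "tr (v k) = of_real (\<tau> k)" for k unfolding \<tau>_def by (rule tr_real)
  have tnn: "\<tau> k \<ge> 0" for k unfolding \<tau>_def by (simp add: sum_nonneg)
  define T where "T = (\<Sum>k<n. q k * \<tau> k)"
  have trace_eq: "trace (P_A ** \<rho>) = of_real T" unfolding rho trace_rho trv T_def by simp
  have Tpos: "T > 0" using assms(3) trace_eq by simp
  define c where "c k = (\<Sum>i\<in>UNIV. cnj (a k $ i) * b k $ i)" for k
  have na: "(\<Sum>i\<in>UNIV. a k $ i * cnj (a k $ i)) = 1" if "k<n" for k
    using norm_sq[of "a k"] H that by simp
  have nb: "(\<Sum>i\<in>UNIV. b k $ i * cnj (b k $ i)) = 1" if "k<n" for k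
    using norm_sq[of "b k"] H that by simp
  have tc: "2 * of_real (\<tau> k) = 1 - c k * cnj (c k)" if "k<n" for k
    using tr_tv[of "a k" "b k"] trv[of k] na[OF that] nb[OF that] unfolding v_def c_def by (simp add: mult.commute)
  define q' where "q' k = q k * \<tau> k / T" for k
  define b' where "b' k = (if \<tau> k > 0 then (\<chi> i. (b k $ i - c k * a k $ i) / of_real (sqrt (2 * \<tau> k))) else b k)" for k
  define v' where "v' k = tv (a k) (b' k)" for k
  define \<rho>' where "\<rho>' = rho_of n q' v'"
  have anti': "anti (v' k) x = anti (v k) x / of_real (sqrt (2 * \<tau> k))" if "\<tau> k > 0" for k x
    using that unfolding v'_def v_def b'_def by (simp add: anti_scale)
  have sq: "of_real (sqrt (2*\<tau> k)) * of_real (sqrt (2*\<tau> k)) = (of_real (2*\<tau> k) :: complex)" for k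
    using tnn[of k] by (simp flip: of_real_mult)
  have A'eq: "anti (v' k) x * cnj (anti (v' k) y) = anti (v k) x * cnj (anti (v k) y) / of_real (2 * \<tau> k)"
    if "\<tau> k > 0" for k x y
    unfolding anti'[OF that] using sq[of k] by simp
  have A0: "anti (v k) x = 0" if "\<tau> k = 0" for k x
  proof -
    have "(cmod (anti (v k) x))^2 = 0" using that unfolding \<tau>_def
      by (cases x) (subst (asm) sum_nonneg_eq_0_iff, auto)
    thus ?thesis by simp
  qed
  have trv': "of_real (q' k) * tr (v' k) = of_real (q' k) / 2" for k
  proof (cases "\<tau> k > 0")
    case True
    have "tr (v' k) = (\<Sum>x\<in>UNIV. anti (v k) x * cnj (anti (v k) x) / of_real (2*\<tau> k))"
      unfolding tr_sos using A'eq[OF True] by simp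
    also have "\<dots> = tr (v k) / of_real (2*\<tau> k)" by (simp add: tr_sos sum_divide_distrib)
    also have "\<dots> = 1/2" using True by (simp add: trv)
    finally show ?thesis by simp
  next
    case False then have "\<tau> k = 0" using tnn[of k] by linarith
    then show ?thesis by (simp add: q'_def)
  qed
  have sumq': "(\<Sum>k<n. q' k) = 1"
    using Tpos by (simp add: q'_def sum_divide_distrib[symmetric] T_def)
  have sep: "separable \<rho>'"
    unfolding separable_def
  proof (rule exI[of _ n], rule exI[of _ q'], rule exI[of _ a], rule exI[of _ b'], intro conjI allI impI)
    fix k assume k: "k < n"
    show "q' k \<ge> 0" using H k tnn[of k] Tpos by (simp add: q'_def)
    show "norm (a k) = 1" using H k by simp
    show "norm (b' k) = 1"
    proof (cases "\<tau> k > 0")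
      case True
      have "complex_of_real ((norm (b' k))^2) = (\<Sum>i\<in>UNIV. (b k $ i - c k * a k $ i) * cnj (b k $ i - c k * a k $ i)) / of_real (2*\<tau> k)"
        unfolding norm_sq using True sq[of k] by (simp add: b'_def sum_divide_distrib)
      also have "\<dots> = 1"
        unfolding norm_diff[OF na[OF k] nb[OF k] c_def] tc[OF k, symmetric] using True by simp
      finally have "(norm (b' k))^2 = 1" by (simp del: of_real_power)
      then show ?thesis using norm_ge_zero[of "b' k"] by (auto simp add: power2_eq_1_iff)
    next
      case False then show ?thesis using H k by (simp add: b'_def)
    qed
  next
    show "(\<Sum>k<n. q' k) = 1" by (rule sumq')
  next
    show "\<rho>' = (\<Sum>k<n. cmat_scale (complex_of_real (q' k)) (prod_proj (a k) (b' k)))"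
      unfolding \<rho>'_def rho_of_def v'_def prod_proj_outer ..
  qed
  have tr': "trace (P_A ** \<rho>') = 1/2"
  proof -
    have "trace (P_A ** \<rho>') = (\<Sum>k<n. of_real (q' k) / 2)"
      unfolding \<rho>'_def trace_rho trv' ..
    also have "\<dots> = of_real (\<Sum>k<n. q' k) / 2" by (simp add: sum_divide_distrib)
    finally show ?thesis using sumq' by simp
  qed
  have trm: "of_real (q' k) * (anti (v' k) x * cnj (anti (v' k) y)) =
      of_real (q k) * (anti (v k) x * cnj (anti (v k) y)) / (2 * of_real T)" for k x y
  proof (cases "\<tau> k > 0")
    case True
    then show ?thesis using Tpos unfolding A'eq[OF True] by (simp add: q'_def field_simps)
  next
    case False then have "\<tau> k = 0" using tnn[of k] by linarith
    then show ?thesis by (simp add: q'_def A0)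
  qed
  have fin: "cmat_scale (inverse (trace (P_A ** \<rho>))) (P_A ** \<rho> ** P_A) =
           cmat_scale (inverse (trace (P_A ** \<rho>'))) (P_A ** \<rho>' ** P_A)"
    unfolding rho \<rho>'_def
  proof (subst vec_eq_iff, intro allI, subst vec_eq_iff, intro allI)
    fix x y
    have tq: "trace (P_A ** rho_of n q v) = of_real T" using trace_eq rho by simp
    have tq': "trace (P_A ** rho_of n q' v') = 1/2" using tr' \<rho>'_def by simp
    have alg: "inverse (of_real T) * S = inverse (1/2) * (S / (2 * of_real T))" for S :: complex
      using Tpos by (simp add: field_simps)
    have e: "(\<Sum>k<n. of_real (q' k) * (anti (v' k) x * cnj (anti (v' k) y))) =
        (\<Sum>k<n. of_real (q k) * (anti (v k) x * cnj (anti (v k) y))) / (2 * of_real T)"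
      by (simp only: trm sum_divide_distrib)
    show "cmat_scale (inverse (trace (P_A ** rho_of n q v))) (P_A ** rho_of n q v ** P_A) $ x $ y =
          cmat_scale (inverse (trace (P_A ** rho_of n q' v'))) (P_A ** rho_of n q' v' ** P_A) $ x $ y"
      unfolding cmat_scale_def vec_lambda_beta PrhoP_entry e tq tq' by (rule alg)
  qed
  show ?thesis using sep tr' fin by blast
qed

end
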